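(* If $G$ is a $3$-e.c. strongly regular graph with parameters $(v,k,\lambda,\mu)$, then $$\mu(k-\lambda-3)\ \ge\ v-2k+\mu-2.$$
   Context: A strongly regular graph with parameters $(v,k,\lambda,\mu)$ is a $k$-regular graph on $v$ vertices in which every pair of adjacent vertices has exactly $\lambda$ common neighbours and every pair of distinct nonadjacent vertices has exactly $\mu$ common neighbours; it has at least one edge and at least one pair of distinct nonadjacent vertices. A graph with vertex set $V$ is $n$-e.c. if for every pair of disjoint subsets $A,B\subseteq V$ with $|A\cup B|=n$ (either may be empty) there is a vertex $z\notin A\cup B$ adjacent to every vertex of $A$ and to no vertex of $B$. *)

theory Defs
  imports Main
begin

text \<open>A finite simple graph: finite vertex set V and a symmetric, irreflexive
adjacency relation E (only its restriction to V matters).\<close>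
definition simple_graph :: "'a set \<Rightarrow> ('a \<Rightarrow> 'a \<Rightarrow> bool) \<Rightarrow> bool" where
  "simple_graph V E \<longleftrightarrow> finite V \<and> (\<forall>x\<in>V. \<forall>y\<in>V. E x y \<longleftrightarrow> E y x) \<and> (\<forall>x\<in>V. \<not> E x x)"

definition nbhd :: "'a set \<Rightarrow> ('a \<Rightarrow> 'a \<Rightarrow> bool) \<Rightarrow> 'a \<Rightarrow> 'a set" where
  "nbhd V E x = {y \<in> V. E x y}"

definition strongly_regular ::
  "'a set \<Rightarrow> ('a \<Rightarrow> 'a \<Rightarrow> bool) \<Rightarrow> nat \<Rightarrow> nat \<Rightarrow> nat \<Rightarrow> nat \<Rightarrow> bool" where
  "strongly_regular V E v k lam mu \<longleftrightarrow>
     simple_graph V E \<and> card V = v \<and>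
     (\<forall>x\<in>V. card (nbhd V E x) = k) \<and>
     (\<forall>x\<in>V. \<forall>y\<in>V. E x y \<longrightarrow> card (nbhd V E x \<inter> nbhd V E y) = lam) \<and>
     (\<forall>x\<in>V. \<forall>y\<in>V. x \<noteq> y \<and> \<not> E x y \<longrightarrow> card (nbhd V E x \<inter> nbhd V E y) = mu) \<and>
     (\<exists>x\<in>V. \<exists>y\<in>V. E x y) \<and>
     (\<exists>x\<in>V. \<exists>y\<in>V. x \<noteq> y \<and> \<not> E x y)"

definition n_ec :: "nat \<Rightarrow> 'a set \<Rightarrow> ('a \<Rightarrow> 'a \<Rightarrow> bool) \<Rightarrow> bool" where
  "n_ec n V E \<longleftrightarrow>
     (\<forall>A B. A \<subseteq> V \<and> B \<subseteq> V \<and> A \<inter> B = {} \<and> card (A \<union> B) = n \<longrightarrow>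
        (\<exists>z\<in>V. z \<notin> A \<union> B \<and> (\<forall>a\<in>A. E z a) \<and> (\<forall>b\<in>B. \<not> E z b)))"

end

theory Submission
  imports Defs
begin

theorem mainTheorem6:
  fixes V :: "'a set" and E :: "'a \<Rightarrow> 'a \<Rightarrow> bool" and v k lam mu :: nat
  assumes "strongly_regular V E v k lam mu"
    and "n_ec 3 V E"
  shows "int mu * (int k - int lam - 3) \<ge> int v - 2 * int k + int mu - 2"
proof -
  let ?N = "nbhd V E"
  have fin: "finite V" and sym: "\<And>a b. a \<in> V \<Longrightarrow> b \<in> V \<Longrightarrow> E a b \<longleftrightarrow> E b a"
    and irr: "\<And>a. a \<in> V \<Longrightarrow> \<not> E a a"
    using assms(1) unfolding strongly_regular_def simple_graph_def by auto
  have cV: "card V = v" and deg: "\<And>a. a \<in> V \<Longrightarrow> card (?N a) = k"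
    and lamd: "\<And>a b. a \<in> V \<Longrightarrow> b \<in> V \<Longrightarrow> E a b \<Longrightarrow> card (?N a \<inter> ?N b) = lam"
    and mud: "\<And>a b. a \<in> V \<Longrightarrow> b \<in> V \<Longrightarrow> a \<noteq> b \<Longrightarrow> \<not> E a b \<Longrightarrow> card (?N a \<inter> ?N b) = mu"
    using assms(1) unfolding strongly_regular_def by auto
  obtain x y where x: "x \<in> V" and y: "y \<in> V" and xy: "x \<noteq> y" and nxy: "\<not> E x y"
    using assms(1) unfolding strongly_regular_def by auto
  have ec: "\<And>A B. A \<subseteq> V \<Longrightarrow> B \<subseteq> V \<Longrightarrow> A \<inter> B = {} \<Longrightarrow> card (A \<union> B) = 3 \<Longrightarrow>
        (\<exists>z\<in>V. z \<notin> A \<union> B \<and> (\<forall>a\<in>A. E z a) \<and> (\<forall>b\<in>B. \<not> E z b))"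
    using assms(2) unfolding n_ec_def by blast
  have Nsub: "\<And>a. ?N a \<subseteq> V" unfolding nbhd_def by auto
  have Nfin: "\<And>a. finite (?N a)" using Nsub fin finite_subset by metis
  define C where "C = ?N x \<inter> ?N y"
  define W where "W = V - ({x,y} \<union> (?N x \<union> ?N y))"
  have cC: "card C = mu" using mud[OF x y xy nxy] C_def by simp
  have finC: "finite C" using C_def Nfin by auto
  have finW: "finite W" using W_def fin by auto
  have d1: "{x,y} \<inter> (?N x \<union> ?N y) = {}"
    using irr[OF x] irr[OF y] nxy sym[OF x y] unfolding nbhd_def by auto
  have cU: "card (?N x \<union> ?N y) + mu = 2 * k"
    using card_Un_Int[OF Nfin Nfin, of x y] deg[OF x] deg[OF y] mud[OF x y xy nxy] by simp
  have cU2: "card ({x,y} \<union> (?N x \<union> ?N y)) = 2 + card (?N x \<union> ?N y)"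
    using card_Un_disjoint[OF _ _ d1] Nfin xy by simp
  have subs: "{x,y} \<union> (?N x \<union> ?N y) \<subseteq> V" using x y Nsub by auto
  have cW: "card W + card ({x,y} \<union> (?N x \<union> ?N y)) = v"
    using card_Diff_subset[OF finite_subset[OF subs fin] subs] card_mono[OF fin subs] cV W_def by simp
  have cWi: "int (card W) = int v - 2 * int k + int mu - 2"
    using cW cU2 cU by linarith
  have cover: "W \<subseteq> (\<Union>c\<in>C. ?N c \<inter> W)"
  proof
    fix w assume w: "w \<in> W"
    then have wV: "w \<in> V" and wx: "w \<noteq> x" "w \<noteq> y" and nw: "\<not> E x w" "\<not> E y w"
      unfolding W_def nbhd_def by auto
    have "card ({x,y,w} \<union> {}) = 3" using xy wx by auto
    then obtain z where z: "z \<in> V" "E z x" "E z y" "E z w"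
      using ec[of "{x,y,w}" "{}"] x y wV by auto
    have "z \<in> C" using z sym x y unfolding C_def nbhd_def by auto
    moreover have "w \<in> ?N z \<inter> W" using z w wV unfolding nbhd_def by auto
    ultimately show "w \<in> (\<Union>c\<in>C. ?N c \<inter> W)" by blast
  qed
  have each: "card (?N c \<inter> W) + lam + 3 \<le> k" if c: "c \<in> C" for c
  proof -
    have cV': "c \<in> V" and cx: "E x c" "E y c" using c unfolding C_def nbhd_def by auto
    have exc: "E c x" "E c y" using cx sym x y cV' by auto
    have cnx: "c \<noteq> x" "c \<noteq> y" using exc irr x y by auto
    have "card ({c,y} \<union> {x}) = 3" using cnx xy by auto
    then obtain z where z: "z \<in> V" "E z c" "E z y" "\<not> E z x" "z \<noteq> x"
      using ec[of "{c,y}" "{x}"] x y cV' cnx xy by auto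
    have zN: "z \<in> ?N c" "z \<notin> ?N x" "z \<in> ?N y" using z sym cV' x y unfolding nbhd_def by auto
    let ?P = "?N c \<inter> ?N x"
    let ?Q = "?N c \<inter> W"
    have fP: "finite ?P" "finite ?Q" using Nfin by auto
    have dj1: "{x,y} \<inter> ?P = {}" using irr x y nxy sym unfolding nbhd_def by auto
    have dj2: "({x,y} \<union> ?P) \<inter> {z} = {}" using zN z nxy irr[OF y] by (auto simp: nbhd_def)
    have dj3: "({x,y} \<union> ?P \<union> {z}) \<inter> ?Q = {}" using zN unfolding W_def by auto
    have sub: "{x,y} \<union> ?P \<union> {z} \<union> ?Q \<subseteq> ?N c" using exc x y zN by (auto simp: nbhd_def)
    have c1: "card ({x,y} \<union> ?P) = 2 + lam"
      using card_Un_disjoint[OF _ fP(1) dj1] xy lamd[OF cV' x exc(1)] by simp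
    have c2: "card ({x,y} \<union> ?P \<union> {z}) = 3 + lam"
      using card_Un_disjoint[OF _ _ dj2] c1 fP by simp
    have c3: "card ({x,y} \<union> ?P \<union> {z} \<union> ?Q) = 3 + lam + card ?Q"
      using card_Un_disjoint[OF _ fP(2) dj3] c2 fP by simp
    show ?thesis using card_mono[OF Nfin sub] c3 deg[OF cV'] by simp
  qed
  have "card W \<le> card (\<Union>c\<in>C. ?N c \<inter> W)"
    using card_mono[OF _ cover] finW finC by auto
  also have "\<dots> \<le> (\<Sum>c\<in>C. card (?N c \<inter> W))" by (rule card_UN_le[OF finC])
  finally have "int (card W) \<le> (\<Sum>c\<in>C. int (card (?N c \<inter> W)))" by (simp flip: of_nat_sum)
  also have "\<dots> \<le> (\<Sum>c\<in>C. int k - int lam - 3)"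
    using each by (intro sum_mono) force
  also have "\<dots> = int mu * (int k - int lam - 3)" using cC by simp
  finally show ?thesis using cWi by linarith
qed

end
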